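(* Let $G=([n],E)$ be an undirected graph, and let $\mathrm{CIM}_G=\operatorname{conv}\left(c_\mathcal{G}\colon \mathcal{G}=([n],E')\text{ a DAG with skeleton } G\right)$. Then $\operatorname{diam}(\mathrm{CIM}_G)\leq |E|$.
   Context: For a directed acyclic graph (DAG) $\mathcal{G}$ on vertex set $[n]=\{1,\dots,n\}$, the characteristic imset $c_\mathcal{G}$ is the 0/1-vector indexed by the subsets $S\subseteq[n]$ with $|S|\geq 2$, with $c_\mathcal{G}(S)=1$ if there exists $i\in S$ such that $S\subseteq \mathrm{pa}_\mathcal{G}(i)\cup\{i\}$ (where $\mathrm{pa}_\mathcal{G}(i)$ is the set of parents of $i$), and $c_\mathcal{G}(S)=0$ otherwise. The skeleton of a DAG is the undirected graph with the same vertices and adjacencies. For a polytope $P$, the vertex-edge graph $G(P)$ has the vertices of $P$ as nodes, with two vertices adjacent iff their convex hull is an edge of $P$; $\operatorname{diam}(P)$ is the maximum over pairs of vertices of the length of a shortest path between them in $G(P)$. *)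

theory Defs
  imports "HOL-Analysis.Analysis" "HOL-Analysis.Finite_Function_Topology" "HOL-Library.Extended_Nat"
begin

definition undirected_graph :: "nat \<Rightarrow> nat set set \<Rightarrow> bool" where
  "undirected_graph n E \<longleftrightarrow> (\<forall>e\<in>E. e \<subseteq> {1..n} \<and> card e = 2)"

text \<open>A DAG on [n]: a set of arcs (i,j) meaning i -> j, with no directed cycles
  (in particular no loops).\<close>
definition is_dag :: "nat \<Rightarrow> (nat \<times> nat) set \<Rightarrow> bool" where
  "is_dag n D \<longleftrightarrow> D \<subseteq> {1..n} \<times> {1..n} \<and> acyclic D"

definition skeleton :: "(nat \<times> nat) set \<Rightarrow> nat set set" where
  "skeleton D = {{i, j} | i j. (i, j) \<in> D}"

definition parents :: "(nat \<times> nat) set \<Rightarrow> nat \<Rightarrow> nat set" where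
  "parents D i = {j. (j, i) \<in> D}"

definition char_imset :: "nat \<Rightarrow> (nat \<times> nat) set \<Rightarrow> (nat set \<Rightarrow>\<^sub>0 real)" where
  "char_imset n D = Abs_poly_mapping (\<lambda>S.
     if S \<subseteq> {1..n} \<and> 2 \<le> card S \<and> (\<exists>i\<in>S. S \<subseteq> parents D i \<union> {i}) then 1 else 0)"

definition CIM :: "nat \<Rightarrow> nat set set \<Rightarrow> (nat set \<Rightarrow>\<^sub>0 real) set" where
  "CIM n E = convex hull (char_imset n ` {D. is_dag n D \<and> skeleton D = E})"

definition poly_vertices :: "'a::real_vector set \<Rightarrow> 'a set" where
  "poly_vertices P = {v. v extreme_point_of P}"

definition poly_adjacent :: "'a::real_vector set \<Rightarrow> 'a \<Rightarrow> 'a \<Rightarrow> bool" where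
  "poly_adjacent P u v \<longleftrightarrow> u \<in> poly_vertices P \<and> v \<in> poly_vertices P \<and> u \<noteq> v
     \<and> convex hull {u, v} face_of P"

text \<open>Graph distance in the vertex-edge graph (infinity if not connected).\<close>
definition poly_dist :: "'a::real_vector set \<Rightarrow> 'a \<Rightarrow> 'a \<Rightarrow> enat" where
  "poly_dist P u v = (INF k \<in> {k::nat. \<exists>p. length p = Suc k \<and> hd p = u \<and> last p = v
       \<and> (\<forall>i<k. poly_adjacent P (p ! i) (p ! Suc i))}. enat k)"

definition poly_diam :: "'a::real_vector set \<Rightarrow> enat" where
  "poly_diam P = (SUP u \<in> poly_vertices P. SUP v \<in> poly_vertices P. poly_dist P u v)"

end

theory Submission imports Defs begin


lemma lookup_scaleR_pm: "Poly_Mapping.lookup (r *\<^sub>R (x::'b \<Rightarrow>\<^sub>0 real)) i = r * Poly_Mapping.lookup x i"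
proof -
  have "finite {i. r *\<^sub>R Poly_Mapping.lookup x i \<noteq> 0}"
  proof (rule finite_subset[of _ "Poly_Mapping.keys x"])
    show "{i. r *\<^sub>R Poly_Mapping.lookup x i \<noteq> 0} \<subseteq> Poly_Mapping.keys x" by (auto simp: Poly_Mapping.in_keys_iff)
  qed simp
  then show ?thesis by (simp add: scaleR_poly_mapping_def)
qed

lemma exposed_face:
  fixes W :: "'a::real_vector set" and l :: "'a \<Rightarrow> real"
  assumes fin: "finite W" and lin: "linear l" and le: "\<And>w. w\<in>W \<Longrightarrow> l w \<le> m"
  shows "convex hull {w\<in>W. l w = m} face_of convex hull W"
proof -
  define W' where "W' = {w\<in>W. l w = m}"
  have finW': "finite W'" using fin unfolding W'_def by auto
  have Hle: "l x \<le> m" if "x \<in> convex hull W" for x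
  proof -
    have "x \<in> {y. \<exists>u. (\<forall>x\<in>W. 0 \<le> u x) \<and> sum u W = 1 \<and> (\<Sum>x\<in>W. u x *\<^sub>R x) = y}"
      using that convex_hull_finite[OF fin] by simp
    then obtain u where u: "\<forall>x\<in>W. 0 \<le> u x" "sum u W = 1" "(\<Sum>x\<in>W. u x *\<^sub>R x) = x"
      by blast
    have "l x = l (\<Sum>w\<in>W. u w *\<^sub>R w)" using u(3) by simp
    also have "\<dots> = (\<Sum>w\<in>W. u w * l w)"
      by (simp add: linear_sum[OF lin] linear_scale[OF lin])
    finally have "l x = (\<Sum>w\<in>W. u w * l w)" .
    also have "\<dots> \<le> (\<Sum>w\<in>W. u w * m)"
      by (rule sum_mono) (simp add: le mult_left_mono u(1))
    also have "\<dots> = m" using u(2) by (simp add: sum_distrib_right[symmetric])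
    finally show ?thesis .
  qed
  have Heq: "x \<in> convex hull W'" if x: "x \<in> convex hull W" "l x = m" for x
  proof -
    have "x \<in> {y. \<exists>u. (\<forall>x\<in>W. 0 \<le> u x) \<and> sum u W = 1 \<and> (\<Sum>x\<in>W. u x *\<^sub>R x) = y}"
      using x(1) convex_hull_finite[OF fin] by simp
    then obtain u where u: "\<forall>x\<in>W. 0 \<le> u x" "sum u W = 1" "(\<Sum>x\<in>W. u x *\<^sub>R x) = x"
      by blast
    have "l x = l (\<Sum>w\<in>W. u w *\<^sub>R w)" using u(3) by simp
    also have "\<dots> = (\<Sum>w\<in>W. u w * l w)"
      by (simp add: linear_sum[OF lin] linear_scale[OF lin])
    finally have "l x = (\<Sum>w\<in>W. u w * l w)" .
    then have "(\<Sum>w\<in>W. u w * (m - l w)) = 0"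
      using x(2) u(2) by (simp add: right_diff_distrib sum_subtractf sum_distrib_right[symmetric])
    moreover have "\<forall>w\<in>W. 0 \<le> u w * (m - l w)" using u(1) le by simp
    ultimately have z: "\<forall>w\<in>W. u w * (m - l w) = 0"
      using sum_nonneg_eq_0_iff[OF fin, of "\<lambda>w. u w * (m - l w)"] by blast
    have z2: "u w = 0" if "w \<in> W - W'" for w
      using z that le[of w] unfolding W'_def by auto
    have "sum u W' = 1"
      using u(2) sum.mono_neutral_left[OF fin, of W' u] z2 unfolding W'_def by auto
    moreover have "(\<Sum>w\<in>W'. u w *\<^sub>R w) = x"
      using u(3) sum.mono_neutral_left[OF fin, of W' "\<lambda>w. u w *\<^sub>R w"] z2 unfolding W'_def by auto
    ultimately show ?thesis
      unfolding convex_hull_finite[OF finW'] using u(1) unfolding W'_def by auto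
  qed
  have sub: "convex hull W' \<subseteq> convex hull W" by (rule hull_mono) (auto simp: W'_def)
  have eqm: "l x = m" if "x \<in> convex hull W'" for x
  proof -
    have "convex (l -` {m})" by (rule convex_linear_vimage[OF lin]) simp
    then have "convex hull W' \<subseteq> l -` {m}"
      by (intro hull_minimal) (auto simp: W'_def)
    then show ?thesis using that by auto
  qed
  show ?thesis
    unfolding W'_def[symmetric] face_of_def
  proof (intro conjI sub convex_convex_hull ballI impI)
    fix a b x assume a: "a \<in> convex hull W" and b: "b \<in> convex hull W"
      and x: "x \<in> convex hull W'" and seg: "x \<in> open_segment a b"
    obtain t where t: "0 < t" "t < 1" "x = (1 - t) *\<^sub>R a + t *\<^sub>R b"
      using seg by (auto simp: in_segment)
    have "l x = (1 - t) * l a + t * l b"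
      using t(3) by (simp add: linear_add[OF lin] linear_scale[OF lin])
    moreover have "l x = m" using eqm x by auto
    moreover have "l a \<le> m" "l b \<le> m" using Hle a b by auto
    ultimately have lx: "(1 - t) * l a + t * l b = m" and la: "l a \<le> m" and lb: "l b \<le> m" by auto
    have 1: "(1 - t) * l a \<le> (1 - t) * m" using la t by (intro mult_left_mono) auto
    have 2: "t * l b \<le> t * m" using lb t by (intro mult_left_mono) auto
    have "l a = m"
    proof (rule ccontr)
      assume "l a \<noteq> m" then have "l a < m" using la by auto
      then have "(1 - t) * l a < (1 - t) * m" using t by (intro mult_strict_left_mono) auto
      then show False using 2 lx by (simp add: algebra_simps)
    qed
    moreover have "l b = m"
    proof (rule ccontr)
      assume "l b \<noteq> m" then have "l b < m" using lb by auto
      then have "t * l b < t * m" using t by (intro mult_strict_left_mono) auto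
      then show False using 1 lx by (simp add: algebra_simps)
    qed
    ultimately show "a \<in> convex hull W'" "b \<in> convex hull W'" using Heq a b by auto
  qed
qed



abbreviation lk where "lk \<equiv> Poly_Mapping.lookup"

definition ci :: "nat \<Rightarrow> (nat \<times> nat) set \<Rightarrow> nat set \<Rightarrow> bool" where
  "ci n D S \<longleftrightarrow> S \<subseteq> {1..n} \<and> 2 \<le> card S \<and> (\<exists>i\<in>S. S \<subseteq> parents D i \<union> {i})"

lemma lk_char: "lk (char_imset n D) S = (if ci n D S then 1 else 0)"
proof -
  have "finite {S. (if ci n D S then 1 else 0::real) \<noteq> 0}"
    by (rule finite_subset[of _ "Pow {1..n}"]) (auto simp: ci_def)
  then show ?thesis unfolding char_imset_def ci_def by simp
qed

lemma skel_adj: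
  assumes "skeleton D2 = skeleton D" "(x,y) \<in> D2"
  shows "(x,y) \<in> D \<or> (y,x) \<in> D"
proof -
  have "{x,y} \<in> skeleton D2" unfolding skeleton_def using assms(2) by blast
  then have "{x,y} \<in> skeleton D" using assms(1) by simp
  then obtain i j where "{x,y} = {i,j}" "(i,j) \<in> D" unfolding skeleton_def by auto
  then show ?thesis by (auto simp: doubleton_eq_iff)
qed

lemma dag_irrefl: "is_dag n D \<Longrightarrow> (x,x) \<notin> D"
  unfolding is_dag_def acyclic_def by auto

lemma dag_2cyc: "is_dag n D \<Longrightarrow> (x,y) \<in> D \<Longrightarrow> (y,x) \<in> D \<Longrightarrow> False"
  unfolding is_dag_def acyclic_def by (meson trancl.simps trancl_trans)

lemma dag_3cyc: "is_dag n D \<Longrightarrow> (x,y) \<in> D \<Longrightarrow> (y,z) \<in> D \<Longrightarrow> (z,x) \<in> D \<Longrightarrow> False"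
  unfolding is_dag_def acyclic_def by (meson trancl.simps trancl_trans)

locale revs =
  fixes n :: nat and D D' :: "(nat \<times> nat) set" and a b :: nat
  assumes dagD: "is_dag n D" and dagD': "is_dag n D'" and ab: "(a,b) \<in> D"
    and D'def: "D' = insert (b,a) (D - {(a,b)})"
begin

lemma a_ne_b: "a \<noteq> b" using dag_irrefl[OF dagD] ab by auto
lemma ba_notin: "(b,a) \<notin> D" using dag_2cyc[OF dagD] ab by auto

lemma par_other: "i \<noteq> a \<Longrightarrow> i \<noteq> b \<Longrightarrow> parents D' i = parents D i"
  unfolding parents_def D'def by auto
lemma par_b: "parents D' b = parents D b - {a}"
  unfolding parents_def D'def using a_ne_b by auto
lemma par_a: "parents D' a = insert b (parents D a)"
  unfolding parents_def D'def using a_ne_b by auto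

lemma skel_eq: "skeleton D' = skeleton D"
  unfolding skeleton_def D'def using ab by (auto simp: insert_commute)

lemma U_struct:
  assumes "ci n D S" "\<not> ci n D' S"
  shows "a \<in> S \<and> b \<in> S \<and> S \<subseteq> insert b (parents D b) \<and>
    (\<exists>t\<in>S. t \<in> parents D b \<and> t \<noteq> a \<and> t \<noteq> b \<and> (t,a) \<notin> D \<and> (a,t) \<notin> D)"
proof -
  from assms(1) obtain i where i: "i \<in> S" "S \<subseteq> parents D i \<union> {i}" and S: "S \<subseteq> {1..n}" "2 \<le> card S"
    unfolding ci_def by auto
  have ib: "i = b"
  proof (rule ccontr)
    assume "i \<noteq> b"
    show False
    proof (cases "i = a")
      case True
      then have "S \<subseteq> parents D' i \<union> {i}" using i par_a by auto
      then show False using assms(2) S i unfolding ci_def by auto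
    next
      case False
      then have "S \<subseteq> parents D' i \<union> {i}" using i par_other \<open>i \<noteq> b\<close> by auto
      then show False using assms(2) S i unfolding ci_def by auto
    qed
  qed
  have Ssub: "S \<subseteq> insert b (parents D b)" using i ib by auto
  have aS: "a \<in> S"
  proof (rule ccontr)
    assume "a \<notin> S"
    then have "S \<subseteq> parents D' b \<union> {b}" using Ssub par_b by auto
    then show False using assms(2) S i ib unfolding ci_def by auto
  qed
  obtain t where t: "t \<in> S" "t \<notin> parents D a" "t \<noteq> a" "t \<noteq> b"
  proof -
    have "\<not> S \<subseteq> parents D' a \<union> {a}" using assms(2) S aS unfolding ci_def by auto
    then show ?thesis using that par_a by auto
  qed
  have tb: "t \<in> parents D b" using Ssub t by auto
  have ta: "(t,a) \<notin> D" using t(2) unfolding parents_def by auto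
  have at: "(a,t) \<notin> D"
  proof
    assume "(a,t) \<in> D"
    then have "(a,t) \<in> D'" "(t,b) \<in> D'" "(b,a) \<in> D'"
      using t tb unfolding D'def parents_def by auto
    then show False using dag_3cyc[OF dagD'] by blast
  qed
  show ?thesis using aS i ib Ssub t tb ta at by blast
qed

lemma L1:
  assumes dag2: "is_dag n D2" and sk: "skeleton D2 = skeleton D"
    and agree: "\<forall>S. ci n D S = ci n D' S \<longrightarrow> ci n D2 S = ci n D S"
    and U: "ci n D S1" "\<not> ci n D' S1" and c2: "ci n D2 S1"
  shows "S1 \<subseteq> insert b (parents D2 b)"
proof -
  obtain t where aS: "a \<in> S1" and bS: "b \<in> S1" and Ssub: "S1 \<subseteq> insert b (parents D b)"
    and t: "t \<in> S1" "t \<in> parents D b" "t \<noteq> a" "t \<noteq> b" "(t,a) \<notin> D" "(a,t) \<notin> D"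
    using U_struct[OF U] by blast
  from c2 obtain j where j: "j \<in> S1" "S1 \<subseteq> parents D2 j \<union> {j}" and S: "S1 \<subseteq> {1..n}"
    unfolding ci_def by auto
  have nadj: False if "(t,a) \<in> D2 \<or> (a,t) \<in> D2"
    using that skel_adj[OF sk] t by blast
  show ?thesis
  proof (cases "j = b")
    case True then show ?thesis using j by auto
  next
    case jb: False
    have ja: "j \<noteq> a"
    proof
      assume "j = a"
      then have "(t,a) \<in> D2" using j t unfolding parents_def by auto
      then show False using nadj by auto
    qed
    have jt: "j \<noteq> t"
    proof
      assume "j = t"
      then have "(a,t) \<in> D2" using j aS t unfolding parents_def by auto
      then show False using nadj by auto
    qed
    have a2: "(a,j) \<in> D2" and t2: "(t,j) \<in> D2" using j aS t ja jt unfolding parents_def by auto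
    have jbD: "(j,b) \<in> D" using Ssub j jb unfolding parents_def by auto
    have jaD: "(j,a) \<in> D"
    proof -
      have "(a,j) \<in> D \<or> (j,a) \<in> D" using skel_adj[OF sk a2] .
      moreover have "(a,j) \<notin> D"
      proof
        assume "(a,j) \<in> D"
        then have "(a,j) \<in> D'" "(j,b) \<in> D'" "(b,a) \<in> D'"
          using jbD ja jb unfolding D'def by auto
        then show False using dag_3cyc[OF dagD'] by blast
      qed
      ultimately show ?thesis by auto
    qed
    define R where "R = {a,j,t}"
    have Rsub: "R \<subseteq> {1..n}" using S aS j t unfolding R_def by auto
    have cardR: "card R = 3" using ja jt t unfolding R_def by auto
    have "ci n D2 R" unfolding ci_def using Rsub cardR a2 t2 unfolding R_def parents_def by auto
    moreover have "\<not> ci n D R"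
    proof
      assume "ci n D R"
      then obtain k where k: "k \<in> R" "R \<subseteq> parents D k \<union> {k}" unfolding ci_def by auto
      show False using k jaD t dag_2cyc[OF dagD jaD] ja jt unfolding R_def parents_def by auto
    qed
    moreover have "\<not> ci n D' R"
    proof
      assume "ci n D' R"
      then obtain k where k: "k \<in> R" "R \<subseteq> parents D' k \<union> {k}" unfolding ci_def by auto
      show False using k jaD t dag_2cyc[OF dagD jaD] ja jt jb a_ne_b unfolding R_def parents_def D'def by auto
    qed
    ultimately show ?thesis using agree by auto
  qed
qed

lemma sym: "revs n D' D b a"
proof
  show "is_dag n D'" using dagD' .
  show "is_dag n D" using dagD .
  show "(b,a) \<in> D'" unfolding D'def by auto
  show "D = insert (a,b) (D' - {(b,a)})" unfolding D'def using ab ba_notin by auto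
qed

end



definition UU :: "nat \<Rightarrow> (nat \<times> nat) set \<Rightarrow> (nat \<times> nat) set \<Rightarrow> nat set set" where
  "UU n D D' = {S. ci n D S \<and> \<not> ci n D' S}"

definition topS :: "(nat \<times> nat) set \<Rightarrow> nat \<Rightarrow> nat set" where
  "topS D b = insert b (parents D b)"

lemma UU_sub: "UU n D D' \<subseteq> Pow {1..n}" unfolding UU_def ci_def by blast
lemma UU_fin: "finite (UU n D D')" by (rule finite_subset[OF UU_sub]) simp

lemma dag_par_sub: "is_dag n D \<Longrightarrow> parents D i \<subseteq> {1..n}"
  unfolding is_dag_def parents_def by blast
context revs
begin

lemma top_in_U:
  assumes "UU n D D' \<noteq> {}"
  shows "topS D b \<in> UU n D D'"
proof -
  from assms obtain S1 where S1: "ci n D S1" "\<not> ci n D' S1" unfolding UU_def by auto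
  obtain t where t: "t \<in> parents D b" "t \<noteq> a" "t \<noteq> b" "(t,a) \<notin> D" "(a,t) \<notin> D"
    using U_struct[OF S1] by blast
  have bn: "b \<in> {1..n}" using dagD ab unfolding is_dag_def by auto
  have aP: "a \<in> parents D b" using ab unfolding parents_def by auto
  have sub: "topS D b \<subseteq> {1..n}" using bn dag_par_sub[OF dagD] unfolding topS_def by auto
  have fin: "finite (topS D b)" using finite_subset[OF sub] by simp
  have "{a,b} \<subseteq> topS D b" using aP unfolding topS_def by auto
  then have "card {a,b} \<le> card (topS D b)" using fin card_mono by blast
  then have c2: "2 \<le> card (topS D b)" using a_ne_b by auto
  have "ci n D (topS D b)" unfolding ci_def using sub c2 unfolding topS_def by auto
  moreover have "\<not> ci n D' (topS D b)"
  proof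
    assume "ci n D' (topS D b)"
    then obtain k where k: "k \<in> topS D b" "topS D b \<subseteq> parents D' k \<union> {k}" unfolding ci_def by auto
    show False
    proof (cases "k = b")
      case True
      then have "a \<in> parents D' b" using k aP a_ne_b unfolding topS_def by auto
      then show False using par_b by auto
    next
      case kb: False
      show False
      proof (cases "k = a")
        case True
        then have "t \<in> parents D' a \<union> {a}" using k t unfolding topS_def by auto
        then show False using par_a t unfolding parents_def by auto
      next
        case False
        then have "b \<in> parents D' k" using k kb unfolding topS_def by auto
        then have "(b,k) \<in> D" "(k,b) \<in> D" using par_other[OF False kb] k kb unfolding topS_def parents_def by auto
        then show False using dag_2cyc[OF dagD] by blast
      qed
    qed
  qed
  ultimately show ?thesis unfolding UU_def by auto
qed

lemma U_full:
  assumes dag2: "is_dag n D2" and sk: "skeleton D2 = skeleton D"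
    and agree: "\<forall>S. ci n D S = ci n D' S \<longrightarrow> ci n D2 S = ci n D S"
    and c: "ci n D2 (topS D b)" and T: "topS D b \<in> UU n D D'"
  shows "UU n D D' \<subseteq> {S. ci n D2 S}"
proof
  fix S assume S: "S \<in> UU n D D'"
  have T1: "topS D b \<subseteq> insert b (parents D2 b)"
    using L1[OF dag2 sk agree _ _ c] T unfolding UU_def by auto
  have "b \<in> S" "S \<subseteq> topS D b" using U_struct[of S] S unfolding UU_def topS_def by auto
  moreover have "S \<subseteq> {1..n}" "2 \<le> card S" using S unfolding UU_def ci_def by auto
  ultimately show "S \<in> {S. ci n D2 S}" using T1 unfolding ci_def by auto
qed

lemma agree_sym:
  assumes "\<forall>S. ci n D S = ci n D' S \<longrightarrow> ci n D2 S = ci n D S"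
  shows "\<forall>S. ci n D' S = ci n D S \<longrightarrow> ci n D2 S = ci n D' S"
proof (intro allI impI)
  fix S assume "ci n D' S = ci n D S"
  then show "ci n D2 S = ci n D' S" using assms by simp
qed

lemma not_both:
  assumes dag2: "is_dag n D2" and sk: "skeleton D2 = skeleton D"
    and agree: "\<forall>S. ci n D S = ci n D' S \<longrightarrow> ci n D2 S = ci n D S"
    and S1: "S1 \<in> UU n D D'" "ci n D2 S1" and S2: "S2 \<in> UU n D' D" "ci n D2 S2"
  shows False
proof -
  interpret s: revs n D' D b a by (rule sym)
  have "S1 \<subseteq> insert b (parents D2 b)" using L1[OF dag2 sk agree _ _ S1(2)] S1(1) unfolding UU_def by auto
  moreover have "a \<in> S1" using U_struct[of S1] S1(1) unfolding UU_def by auto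
  ultimately have 1: "(a,b) \<in> D2" using a_ne_b unfolding parents_def by auto
  have sk': "skeleton D2 = skeleton D'" using sk skel_eq by simp
  have "S2 \<subseteq> insert a (parents D2 a)"
    using s.L1[OF dag2 sk' agree_sym[OF agree] _ _ S2(2)] S2(1) unfolding UU_def by auto
  moreover have "b \<in> S2" using s.U_struct[of S2] S2(1) unfolding UU_def by auto
  ultimately have 2: "(b,a) \<in> D2" using a_ne_b unfolding parents_def by auto
  show False using dag_2cyc[OF dag2 1 2] .
qed

end



definition coefU :: "nat \<Rightarrow> (nat \<times> nat) set \<Rightarrow> (nat \<times> nat) set \<Rightarrow> real" where
  "coefU n D D' = (if UU n D D' = {} then 0 else real (card (UU n D D')) + (if UU n D' D = {} then 0 else 1))"

definition ell1 :: "nat \<Rightarrow> (nat \<times> nat) set \<Rightarrow> (nat \<times> nat) set \<Rightarrow> nat \<Rightarrow> nat \<Rightarrow> (nat set \<Rightarrow>\<^sub>0 real) \<Rightarrow> real" where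
  "ell1 n D D' a b x = coefU n D D' * lk x (topS D b) + coefU n D' D * lk x (topS D' a)
     - (\<Sum>S\<in>UU n D D' \<union> UU n D' D. lk x S)"

definition mm1 :: "nat \<Rightarrow> (nat \<times> nat) set \<Rightarrow> (nat \<times> nat) set \<Rightarrow> real" where
  "mm1 n D D' = (if UU n D D' \<noteq> {} \<and> UU n D' D \<noteq> {} then 1 else 0)"

lemma ell1_sym: "ell1 n D D' a b = ell1 n D' D b a"
  unfolding ell1_def by (auto simp: Un_commute add.commute)

lemma mm1_sym: "mm1 n D D' = mm1 n D' D"
  unfolding mm1_def by auto

lemma sum_lk_char: "finite A \<Longrightarrow> (\<Sum>S\<in>A. lk (char_imset n D2) S) = real (card {S\<in>A. ci n D2 S})"
  by (simp add: lk_char sum.inter_filter[symmetric])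

lemma ch_eqI: "(\<And>S. ci n D2 S = ci n D S) \<Longrightarrow> char_imset n D2 = char_imset n D"
  by (rule poly_mapping_eqI) (simp add: lk_char)

context revs
begin

lemma caseA:
  assumes dag2: "is_dag n D2" and sk: "skeleton D2 = skeleton D"
    and agree: "\<forall>S. ci n D S = ci n D' S \<longrightarrow> ci n D2 S = ci n D S"
    and A: "\<exists>S\<in>UU n D D'. ci n D2 S"
  shows "if ci n D2 (topS D b) then ell1 n D D' a b (char_imset n D2) = mm1 n D D' \<and> char_imset n D2 = char_imset n D
         else ell1 n D D' a b (char_imset n D2) < mm1 n D D'"
proof -
  interpret s: revs n D' D b a by (rule sym)
  have Une: "UU n D D' \<noteq> {}" using A by auto
  have T: "topS D b \<in> UU n D D'" using top_in_U[OF Une] .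
  have B: "\<forall>S\<in>UU n D' D. \<not> ci n D2 S" using not_both[OF dag2 sk agree] A by blast
  have Vterm: "coefU n D' D * lk (char_imset n D2) (topS D' a) = 0"
  proof (cases "UU n D' D = {}")
    case True then show ?thesis by (simp add: coefU_def)
  next
    case False
    then have "topS D' a \<in> UU n D' D" using s.top_in_U by simp
    then show ?thesis using B by (simp add: lk_char)
  qed
  have filt: "{S \<in> UU n D D' \<union> UU n D' D. ci n D2 S} = {S\<in>UU n D D'. ci n D2 S}" using B by auto
  have ell: "ell1 n D D' a b (char_imset n D2) = coefU n D D' * lk (char_imset n D2) (topS D b)
      - real (card {S\<in>UU n D D'. ci n D2 S})"
    unfolding ell1_def using Vterm sum_lk_char[of "UU n D D' \<union> UU n D' D" n D2] filt
    by (simp add: UU_fin)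
  show ?thesis
  proof (cases "ci n D2 (topS D b)")
    case True
    have full: "UU n D D' \<subseteq> {S. ci n D2 S}" using U_full[OF dag2 sk agree True T] .
    then have "{S\<in>UU n D D'. ci n D2 S} = UU n D D'" by auto
    then have "ell1 n D D' a b (char_imset n D2) = mm1 n D D'"
      using ell True Une by (simp add: lk_char coefU_def mm1_def)
    moreover have "char_imset n D2 = char_imset n D"
    proof (rule ch_eqI)
      fix S show "ci n D2 S = ci n D S"
        using agree full B by (cases "ci n D S = ci n D' S") (auto simp: UU_def)
    qed
    ultimately show ?thesis using True by simp
  next
    case False
    obtain S where S: "S \<in> UU n D D'" "ci n D2 S" using A by auto
    have "card {S\<in>UU n D D'. ci n D2 S} > 0"
      using S by (subst card_gt_0_iff) (auto intro: finite_subset[OF _ UU_fin])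
    then show ?thesis using ell False by (simp add: lk_char mm1_def)
  qed
qed

lemma caseN:
  assumes "\<forall>S\<in>UU n D D'. \<not> ci n D2 S" and "\<forall>S\<in>UU n D' D. \<not> ci n D2 S"
    and agree: "\<forall>S. ci n D S = ci n D' S \<longrightarrow> ci n D2 S = ci n D S"
  shows "ell1 n D D' a b (char_imset n D2) = 0 \<and> (UU n D D' = {} \<longrightarrow> char_imset n D2 = char_imset n D)"
proof -
  interpret s: revs n D' D b a by (rule sym)
  have t1: "coefU n D D' * lk (char_imset n D2) (topS D b) = 0"
  proof (cases "UU n D D' = {}")
    case True then show ?thesis by (simp add: coefU_def)
  next
    case False
    then have "topS D b \<in> UU n D D'" using top_in_U by simp
    then show ?thesis using assms(1) by (simp add: lk_char)
  qed
  have t2: "coefU n D' D * lk (char_imset n D2) (topS D' a) = 0"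
  proof (cases "UU n D' D = {}")
    case True then show ?thesis by (simp add: coefU_def)
  next
    case False
    then have "topS D' a \<in> UU n D' D" using s.top_in_U by simp
    then show ?thesis using assms(2) by (simp add: lk_char)
  qed
  have filt: "{S \<in> UU n D D' \<union> UU n D' D. ci n D2 S} = {}" using assms(1,2) by auto
  have "(\<Sum>S\<in>UU n D D' \<union> UU n D' D. lk (char_imset n D2) S) = real (card {S \<in> UU n D D' \<union> UU n D' D. ci n D2 S})"
    by (rule sum_lk_char) (simp add: UU_fin)
  also have "\<dots> = 0" unfolding filt by simp
  finally have "ell1 n D D' a b (char_imset n D2) = 0"
    unfolding ell1_def t1 t2 by simp
  moreover have "char_imset n D2 = char_imset n D" if U: "UU n D D' = {}"
  proof (rule ch_eqI)
    fix S show "ci n D2 S = ci n D S"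
      using agree U assms(2) by (cases "ci n D S = ci n D' S") (auto simp: UU_def)
  qed
  ultimately show ?thesis by blast
qed

lemma main_l1:
  assumes dag2: "is_dag n D2" and sk: "skeleton D2 = skeleton D"
    and agree: "\<forall>S. ci n D S = ci n D' S \<longrightarrow> ci n D2 S = ci n D S"
  shows "ell1 n D D' a b (char_imset n D2) \<le> mm1 n D D' \<and>
    (ell1 n D D' a b (char_imset n D2) = mm1 n D D' \<longrightarrow>
       char_imset n D2 = char_imset n D \<or> char_imset n D2 = char_imset n D')"
proof -
  interpret s: revs n D' D b a by (rule sym)
  have sk': "skeleton D2 = skeleton D'" using sk skel_eq by simp
  note agree' = agree_sym[OF agree]
  show ?thesis
  proof (cases "\<exists>S\<in>UU n D D'. ci n D2 S")
    case True
    then show ?thesis using caseA[OF dag2 sk agree True] by (auto split: if_splits)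
  next
    case F1: False
    show ?thesis
    proof (cases "\<exists>S\<in>UU n D' D. ci n D2 S")
      case True
      then show ?thesis using s.caseA[OF dag2 sk' agree' True] ell1_sym[of n D D' a b] mm1_sym[of n D D']
        by (auto split: if_splits)
    next
      case False
      have 1: "\<forall>S\<in>UU n D D'. \<not> ci n D2 S" "\<forall>S\<in>UU n D' D. \<not> ci n D2 S" using F1 False by auto
      have e: "ell1 n D D' a b (char_imset n D2) = 0" "UU n D D' = {} \<longrightarrow> char_imset n D2 = char_imset n D"
        using caseN[OF 1 agree] by auto
      have "UU n D' D = {} \<longrightarrow> char_imset n D2 = char_imset n D'"
        using s.caseN[OF 1(2) 1(1) agree'] by auto
      then show ?thesis using e by (auto simp: mm1_def)
    qed
  qed
qed

lemma ell1_D: "ell1 n D D' a b (char_imset n D) = mm1 n D D'"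
proof (cases "UU n D D' = {}")
  case False
  have T: "topS D b \<in> UU n D D'" using top_in_U[OF False] .
  then have "ci n D (topS D b)" by (simp add: UU_def)
  moreover have "\<exists>S\<in>UU n D D'. ci n D S" using T by (auto simp: UU_def)
  ultimately show ?thesis using caseA[OF dagD refl _] by auto
next
  case True
  have "\<forall>S\<in>UU n D D'. \<not> ci n D S" "\<forall>S\<in>UU n D' D. \<not> ci n D S" using True by (auto simp: UU_def)
  then show ?thesis using caseN[of D] True by (auto simp: mm1_def)
qed

lemma ell1_D': "ell1 n D D' a b (char_imset n D') = mm1 n D D'"
proof -
  interpret s: revs n D' D b a by (rule sym)
  show ?thesis using s.ell1_D ell1_sym[of n D D' a b] mm1_sym[of n D D'] by simp
qed

end



definition c0 :: "nat \<Rightarrow> (nat \<times> nat) set \<Rightarrow> (nat \<times> nat) set \<Rightarrow> nat set \<Rightarrow> real" where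
  "c0 n D D' S = (if ci n D S \<and> ci n D' S then 1 else if \<not> ci n D S \<and> \<not> ci n D' S then -1 else 0)"

definition ell0 :: "nat \<Rightarrow> (nat \<times> nat) set \<Rightarrow> (nat \<times> nat) set \<Rightarrow> (nat set \<Rightarrow>\<^sub>0 real) \<Rightarrow> real" where
  "ell0 n D D' x = (\<Sum>S\<in>Pow {1..n}. c0 n D D' S * lk x S)"

definition mm0 :: "nat \<Rightarrow> (nat \<times> nat) set \<Rightarrow> (nat \<times> nat) set \<Rightarrow> real" where
  "mm0 n D D' = (\<Sum>S\<in>Pow {1..n}. if ci n D S \<and> ci n D' S then 1 else 0)"

lemma ell0_term_le: "c0 n D D' S * lk (char_imset n D2) S \<le> (if ci n D S \<and> ci n D' S then 1 else 0)"
  by (auto simp: c0_def lk_char)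

lemma ell0_le: "ell0 n D D' (char_imset n D2) \<le> mm0 n D D'"
  unfolding ell0_def mm0_def by (rule sum_mono) (rule ell0_term_le)

lemma ell0_eq_agree:
  assumes "ell0 n D D' (char_imset n D2) = mm0 n D D'"
  shows "\<forall>S. ci n D S = ci n D' S \<longrightarrow> ci n D2 S = ci n D S"
proof (rule ccontr)
  assume "\<not> ?thesis"
  then obtain S where S: "ci n D S = ci n D' S" "ci n D2 S \<noteq> ci n D S" by auto
  then have Sin: "S \<in> Pow {1..n}" unfolding ci_def by auto
  have "c0 n D D' S * lk (char_imset n D2) S < (if ci n D S \<and> ci n D' S then 1 else 0)"
    using S by (auto simp: c0_def lk_char)
  then have "ell0 n D D' (char_imset n D2) < mm0 n D D'"
    unfolding ell0_def mm0_def
    by (intro sum_strict_mono_ex1[OF finite_Pow_iff[THEN iffD2, OF finite_atLeastAtMost]] ballI ell0_term_le bexI[OF _ Sin])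
  then show False using assms by simp
qed

lemma ell0_agree_eq:
  assumes "\<forall>S. ci n D S = ci n D' S \<longrightarrow> ci n D2 S = ci n D S"
  shows "ell0 n D D' (char_imset n D2) = mm0 n D D'"
  unfolding ell0_def mm0_def
proof (rule sum.cong[OF refl])
  fix S show "c0 n D D' S * lk (char_imset n D2) S = (if ci n D S \<and> ci n D' S then 1 else 0)"
    using assms[rule_format, of S] by (cases "ci n D S"; cases "ci n D' S") (auto simp: c0_def lk_char)
qed

lemma linear_ell0: "linear (ell0 n D D')"
  by (rule linearI) (simp_all add: ell0_def lookup_add lookup_scaleR_pm sum.distrib sum_distrib_left algebra_simps)

lemma linear_ell1: "linear (ell1 n D D' a b)"
  by (rule linearI) (simp_all add: ell1_def lookup_add lookup_scaleR_pm sum.distrib sum_distrib_left algebra_simps)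

lemma finite_dags: "finite {D2. is_dag n D2 \<and> skeleton D2 = E}"
proof (rule finite_subset)
  show "{D2. is_dag n D2 \<and> skeleton D2 = E} \<subseteq> Pow ({1..n} \<times> {1..n})" unfolding is_dag_def by auto
qed simp

context revs
begin

lemma face:
  "convex hull {char_imset n D, char_imset n D'} face_of CIM n (skeleton D)"
proof -
  define W where "W = char_imset n ` {D2. is_dag n D2 \<and> skeleton D2 = skeleton D}"
  have finW: "finite W" unfolding W_def using finite_dags by blast
  define W0 where "W0 = {w\<in>W. ell0 n D D' w = mm0 n D D'}"
  have finW0: "finite W0" using finW unfolding W0_def by auto
  have f1: "convex hull W0 face_of convex hull W"
    unfolding W0_def
    by (rule exposed_face[OF finW linear_ell0]) (auto simp: W_def ell0_le)
  have le1: "ell1 n D D' a b w \<le> mm1 n D D'" if "w \<in> W0" for w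
    using that main_l1 ell0_eq_agree unfolding W0_def W_def by blast
  have f2: "convex hull {w\<in>W0. ell1 n D D' a b w = mm1 n D D'} face_of convex hull W0"
    by (rule exposed_face[OF finW0 linear_ell1 le1])
  have eq: "{w\<in>W0. ell1 n D D' a b w = mm1 n D D'} = {char_imset n D, char_imset n D'}"
  proof
    show "{w\<in>W0. ell1 n D D' a b w = mm1 n D D'} \<subseteq> {char_imset n D, char_imset n D'}"
      using main_l1 ell0_eq_agree unfolding W0_def W_def by blast
  next
    have "char_imset n D \<in> W0"
      unfolding W0_def W_def using dagD ell0_agree_eq[of n D D' D] by auto
    moreover have "char_imset n D' \<in> W0"
      unfolding W0_def W_def using dagD' skel_eq ell0_agree_eq[of n D D' D'] by auto
    ultimately show "{char_imset n D, char_imset n D'} \<subseteq> {w\<in>W0. ell1 n D D' a b w = mm1 n D D'}"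
      using ell1_D ell1_D' by auto
  qed
  show ?thesis
    using face_of_trans[OF f2 f1] unfolding eq CIM_def W_def by simp
qed

end



definition reach :: "(nat set \<Rightarrow>\<^sub>0 real) set \<Rightarrow> (nat set \<Rightarrow>\<^sub>0 real) \<Rightarrow> (nat set \<Rightarrow>\<^sub>0 real) \<Rightarrow> nat \<Rightarrow> bool" where
  "reach P u v k \<longleftrightarrow> (\<exists>p. length p = Suc k \<and> hd p = u \<and> last p = v
       \<and> (\<forall>i<k. poly_adjacent P (p ! i) (p ! Suc i)))"

lemma reach_refl: "reach P u u 0"
  unfolding reach_def by (rule exI[of _ "[u]"]) auto

lemma reach_cons:
  assumes "poly_adjacent P u w" "reach P w v k"
  shows "reach P u v (Suc k)"
proof -
  obtain p where p: "length p = Suc k" "hd p = w" "last p = v" "\<forall>i<k. poly_adjacent P (p ! i) (p ! Suc i)"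
    using assms(2) unfolding reach_def by auto
  have "p \<noteq> []" using p(1) by auto
  then have pc: "p = w # tl p" using p(2) by (cases p) auto
  show ?thesis unfolding reach_def
  proof (intro exI[of _ "u # p"] conjI allI impI)
    show "length (u # p) = Suc (Suc k)" using p by simp
    show "hd (u # p) = u" by simp
    show "last (u # p) = v" using p(3) \<open>p \<noteq> []\<close> by simp
    fix i assume i: "i < Suc k"
    show "poly_adjacent P ((u # p) ! i) ((u # p) ! Suc i)"
    proof (cases i)
      case 0 then show ?thesis using assms(1) pc by (metis nth_Cons_0 nth_Cons_Suc)
    next
      case (Suc j) then show ?thesis using p(4) i by simp
    qed
  qed
qed

lemma reach_dist: "reach P u v k \<Longrightarrow> poly_dist P u v \<le> enat k"
  unfolding poly_dist_def reach_def by (rule INF_lower) auto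

lemma extreme_pair:
  assumes "convex hull {u, v} face_of P" "u \<noteq> v"
  shows "u extreme_point_of P"
proof -
  have "u extreme_point_of convex hull (insert u {v})"
    by (rule extreme_point_of_convex_hull_insert) (use assms(2) in auto)
  then show ?thesis using extreme_point_of_face[OF assms(1)] by auto
qed

lemma adjacentI:
  assumes "convex hull {u, v} face_of P" "u \<noteq> v"
  shows "poly_adjacent P u v"
proof -
  have "convex hull {v, u} face_of P" using assms(1) by (simp add: insert_commute)
  then show ?thesis unfolding poly_adjacent_def poly_vertices_def
    using extreme_pair assms by auto
qed

lemma rtr_antisym: "acyclic r \<Longrightarrow> (x,y) \<in> r\<^sup>* \<Longrightarrow> (y,x) \<in> r\<^sup>* \<Longrightarrow> x = y"
  by (metis acyclic_def rtranclD rtrancl_trancl_trancl)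

definition betw :: "(nat \<times> nat) set \<Rightarrow> nat \<Rightarrow> nat \<Rightarrow> nat set" where
  "betw D x y = {z. (x,z) \<in> D\<^sup>* \<and> (z,y) \<in> D\<^sup>*}"

lemma nest:
  assumes "(x,y) \<in> R\<^sup>*" "R \<subseteq> D1" "(a,x) \<in> D1\<^sup>*" "(y,b) \<in> D1\<^sup>*"
  shows "(x,y) \<in> D2\<^sup>* \<or> (\<exists>p q. (p,q) \<in> R \<and> (p,q) \<notin> D2 \<and> (a,p) \<in> D1\<^sup>* \<and> (q,b) \<in> D1\<^sup>*)"
  using assms(1,4)
proof (induction y rule: rtrancl_induct)
  case base then show ?case by simp
next
  case (step y z)
  have "(y,b) \<in> D1\<^sup>*" using step.hyps(2) step.prems assms(2)
    by (meson converse_rtrancl_into_rtrancl subsetD)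
  note IH = step.IH[OF this]
  have ay: "(a,y) \<in> D1\<^sup>*"
    using assms(3) step.hyps(1) rtrancl_mono[OF assms(2)] by (meson rtrancl_trans subsetD)
  show ?case
  proof (cases "(y,z) \<in> D2")
    case True then show ?thesis using IH by (meson rtrancl.rtrancl_into_rtrancl)
  next
    case False then show ?thesis using step.hyps(2) ay step.prems by blast
  qed
qed

lemma rev_step:
  assumes d1: "is_dag n D1" and d2: "is_dag n D2" and sk: "skeleton D1 = skeleton D2"
    and ne: "D1 - D2 \<noteq> {}"
  shows "\<exists>a b. (a,b) \<in> D1 - D2 \<and> is_dag n (insert (b,a) (D1 - {(a,b)}))"
proof -
  obtain e where e: "e \<in> D1 - D2" using ne by auto
  obtain ab where ab: "ab \<in> D1 - D2" and min: "\<forall>y. y \<in> D1 - D2 \<longrightarrow> card (betw D1 (fst ab) (snd ab)) \<le> card (betw D1 (fst y) (snd y))"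
    using ex_has_least_nat[of "\<lambda>e. e \<in> D1 - D2" e "\<lambda>e. card (betw D1 (fst e) (snd e))"] e by blast
  obtain a b where abe: "ab = (a,b)" by (cases ab)
  have abD1: "(a,b) \<in> D1" and abD2: "(a,b) \<notin> D2" using ab abe by auto
  have D1sub: "D1 \<subseteq> {1..n} \<times> {1..n}" and acy1: "acyclic D1" using d1 unfolding is_dag_def by auto
  have acy2: "acyclic D2" using d2 unfolding is_dag_def by auto
  have baD2: "(b,a) \<in> D2" using skel_adj[OF sk abD1] abD2 by auto
  define R where "R = D1 - {(a,b)}"
  have RD1: "R \<subseteq> D1" unfolding R_def by auto
  have notR: "(a,b) \<notin> R\<^sup>*"
  proof
    assume abR: "(a,b) \<in> R\<^sup>*"
    from nest[OF abR RD1, of a b D2] have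
      "(a,b) \<in> D2\<^sup>* \<or> (\<exists>p q. (p,q) \<in> R \<and> (p,q) \<notin> D2 \<and> (a,p) \<in> D1\<^sup>* \<and> (q,b) \<in> D1\<^sup>*)" by simp
    then show False
    proof
      assume "(a,b) \<in> D2\<^sup>*"
      then have "(a,a) \<in> D2\<^sup>+" using baD2 by (meson rtrancl_into_trancl1)
      then show False using acy2 unfolding acyclic_def by auto
    next
      assume "\<exists>p q. (p,q) \<in> R \<and> (p,q) \<notin> D2 \<and> (a,p) \<in> D1\<^sup>* \<and> (q,b) \<in> D1\<^sup>*"
      then obtain p q where pq: "(p,q) \<in> R" "(p,q) \<notin> D2" "(a,p) \<in> D1\<^sup>*" "(q,b) \<in> D1\<^sup>*" by blast
      have an: "a \<in> {1..n}" using D1sub abD1 by auto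
      have finb: "finite (betw D1 a b)"
      proof (rule finite_subset[of _ "{1..n}"])
        show "betw D1 a b \<subseteq> {1..n}"
        proof
          fix z assume "z \<in> betw D1 a b"
          then have "(a,z) \<in> D1\<^sup>*" unfolding betw_def by auto
          then show "z \<in> {1..n}"
          proof (cases rule: rtranclE)
            case base then show ?thesis using an by simp
          next
            case (step y) then show ?thesis using D1sub by auto
          qed
        qed
      qed simp
      have sub: "betw D1 p q \<subseteq> betw D1 a b"
        unfolding betw_def using pq(3,4) by (auto intro: rtrancl_trans)
      have aab: "a \<in> betw D1 a b" "b \<in> betw D1 a b" unfolding betw_def using abD1 by auto
      have "a \<notin> betw D1 p q \<or> b \<notin> betw D1 p q"
      proof (rule ccontr)
        assume "\<not> ?thesis"
        then have "(p,a) \<in> D1\<^sup>*" "(b,q) \<in> D1\<^sup>*" unfolding betw_def by auto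
        then have "p = a" "q = b" using rtr_antisym[OF acy1] pq(3,4) by auto
        then show False using pq(1) unfolding R_def by auto
      qed
      then have "betw D1 p q \<subset> betw D1 a b" using sub aab by auto
      then have "card (betw D1 p q) < card (betw D1 a b)" using finb psubset_card_mono by blast
      moreover have "(p,q) \<in> D1 - D2" using pq RD1 by auto
      ultimately show False using min abe by fastforce
    qed
  qed
  have "acyclic R" using acyclic_subset[OF acy1 RD1] .
  then have "acyclic (insert (b,a) R)" using notR by simp
  moreover have "insert (b,a) R \<subseteq> {1..n} \<times> {1..n}" using D1sub abD1 RD1 by auto
  ultimately show ?thesis using abD1 abD2 unfolding is_dag_def R_def by blast
qed



lemma dag_eq_if_sub:
  assumes "is_dag n D1" "is_dag n D2" "skeleton D1 = skeleton D2" "D1 \<subseteq> D2"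
  shows "D1 = D2"
proof
  show "D2 \<subseteq> D1"
  proof
    fix e assume e: "e \<in> D2"
    obtain x y where xy: "e = (x,y)" by (cases e)
    have "(x,y) \<in> D1 \<or> (y,x) \<in> D1" using skel_adj[OF assms(3)[symmetric]] e xy by auto
    then show "e \<in> D1" using dag_2cyc[OF assms(2)] assms(4) e xy by auto
  qed
qed (rule assms(4))

lemma card_dag_le:
  assumes "is_dag n D"
  shows "card D \<le> card (skeleton D)"
proof -
  have sk: "skeleton D = (\<lambda>(i,j). {i,j}) ` D" unfolding skeleton_def by auto
  have "inj_on (\<lambda>(i,j). {i,j}) D"
  proof (rule inj_onI)
    fix e f assume e: "e \<in> D" and f: "f \<in> D" and eq: "(\<lambda>(i,j). {i::nat,j}) e = (\<lambda>(i,j). {i,j}) f"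
    obtain i j where ij: "e = (i,j)" by (cases e)
    obtain k l where kl: "f = (k,l)" by (cases f)
    have "(i = k \<and> j = l) \<or> (i = l \<and> j = k)" using eq ij kl by (auto simp: doubleton_eq_iff)
    then show "e = f" using dag_2cyc[OF assms] e f ij kl by auto
  qed
  then show ?thesis unfolding sk by (simp add: card_image)
qed

lemma path_lemma:
  assumes d2: "is_dag n D2"
  shows "\<forall>D1. is_dag n D1 \<longrightarrow> skeleton D1 = skeleton D2 \<longrightarrow> card (D1 - D2) = k \<longrightarrow>
    (\<exists>j\<le>k. reach (CIM n (skeleton D2)) (char_imset n D1) (char_imset n D2) j)"
proof (induction k)
  case 0
  show ?case
  proof (intro allI impI)
    fix D1 assume d1: "is_dag n D1" and sk: "skeleton D1 = skeleton D2" and c: "card (D1 - D2) = 0"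
    have "finite D1" using d1 unfolding is_dag_def by (auto intro: finite_subset)
    then have "D1 \<subseteq> D2" using c by auto
    then have "D1 = D2" using dag_eq_if_sub[OF d1 d2 sk] by simp
    then show "\<exists>j\<le>0. reach (CIM n (skeleton D2)) (char_imset n D1) (char_imset n D2) j"
      using reach_refl by auto
  qed
next
  case (Suc k)
  show ?case
  proof (intro allI impI)
    fix D1 assume d1: "is_dag n D1" and sk: "skeleton D1 = skeleton D2" and c: "card (D1 - D2) = Suc k"
    have ne: "D1 - D2 \<noteq> {}" using c by (metis card.empty nat.distinct(1))
    obtain a b where ab: "(a,b) \<in> D1 - D2" and d1': "is_dag n (insert (b,a) (D1 - {(a,b)}))"
      using rev_step[OF d1 d2 sk ne] by blast
    define D1' where "D1' = insert (b,a) (D1 - {(a,b)})"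
    interpret r: revs n D1 D1' a b
      by unfold_locales (use d1 d1' ab in \<open>auto simp: D1'_def\<close>)
    have sk': "skeleton D1' = skeleton D2" using r.skel_eq sk by simp
    have baD2: "(b,a) \<in> D2" using skel_adj[OF sk, of a b] ab by auto
    have "D1' - D2 = (D1 - D2) - {(a,b)}" unfolding D1'_def using baD2 by auto
    then have "card (D1' - D2) = k" using c ab
      by (simp add: card_Diff_singleton_if)
    then obtain j where j: "j \<le> k" "reach (CIM n (skeleton D2)) (char_imset n D1') (char_imset n D2) j"
      using Suc.IH d1' sk' unfolding D1'_def by blast
    have face: "convex hull {char_imset n D1, char_imset n D1'} face_of CIM n (skeleton D2)"
      using r.face sk by simp
    show "\<exists>j\<le>Suc k. reach (CIM n (skeleton D2)) (char_imset n D1) (char_imset n D2) j"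
    proof (cases "char_imset n D1 = char_imset n D1'")
      case True then show ?thesis using j by (intro exI[of _ j]) auto
    next
      case False
      then have "poly_adjacent (CIM n (skeleton D2)) (char_imset n D1) (char_imset n D1')"
        using adjacentI[OF face] by simp
      then show ?thesis using reach_cons j by (intro exI[of _ "Suc j"]) auto
    qed
  qed
qed

theorem mainTheorem1:
  fixes n :: nat and E :: "nat set set"
  assumes "undirected_graph n E"
  shows "poly_diam (CIM n E) \<le> enat (card E)"
  unfolding poly_diam_def
proof (intro SUP_least)
  fix u v assume u: "u \<in> poly_vertices (CIM n E)" and v: "v \<in> poly_vertices (CIM n E)"
  have "u \<in> char_imset n ` {D. is_dag n D \<and> skeleton D = E}"
    using u extreme_point_of_convex_hull unfolding poly_vertices_def CIM_def by blast
  then obtain D1 where D1: "is_dag n D1" "skeleton D1 = E" "u = char_imset n D1" by auto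
  have "v \<in> char_imset n ` {D. is_dag n D \<and> skeleton D = E}"
    using v extreme_point_of_convex_hull unfolding poly_vertices_def CIM_def by blast
  then obtain D2 where D2: "is_dag n D2" "skeleton D2 = E" "v = char_imset n D2" by auto
  obtain j where j: "j \<le> card (D1 - D2)" "reach (CIM n (skeleton D2)) (char_imset n D1) (char_imset n D2) j"
    using path_lemma[OF D2(1), of "card (D1 - D2)"] D1 D2 by auto
  have fin: "finite D1" using D1(1) unfolding is_dag_def by (auto intro: finite_subset)
  have "card (D1 - D2) \<le> card D1" using fin by (simp add: card_mono)
  also have "\<dots> \<le> card E" using card_dag_le[OF D1(1)] D1(2) by simp
  finally have "j \<le> card E" using j(1) by simp
  have "poly_dist (CIM n E) u v \<le> enat j" using reach_dist j(2) D1 D2 by simp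
  also have "\<dots> \<le> enat (card E)" using \<open>j \<le> card E\<close> by simp
  finally show "poly_dist (CIM n E) u v \<le> enat (card E)" .
qed

end
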